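(* Let $\sigma$ be a strongly erasing $k$-block substitution with $w_\epsilon\ne1^k$ that satisfies the optimality condition. Then the set $\mathcal D$ of points $x\in\mathbb I$ whose $f_\sigma$-orbit $\{f_\sigma^n(x):n\ge0\}$ is dense in $\mathbb I$ is uncountable and dense in $\mathbb I$.
   Context: Notation: $\mathbb I=[0,1]$. $\{0,1\}^*$ and $\{0,1\}^\omega$ denote finite and infinite binary words, and $\epsilon$ is the empty word. For a word $w$, set $0.w=\sum_iw_i2^{-i}$. For $x\in(0,1]$, $\widetilde x$ is the unique infinite binary expansion of $x$ not ending in $0^\infty$. Fix $k\ge2$. An erasing $k$-block substitution is a map $\sigma:\{0,1\}^k\to\{0,1\}^*$ with exactly one block $w_\epsilon$ such that $\sigma(w_\epsilon)=\epsilon$. It acts blockwise on infinite words and on finite words of length a multiple of $k$, concatenating the images of consecutive $k$-blocks. $k$-rounding: a $k$-rounding of $w$ is any word $wv$ whose length is the least multiple of $k$ that is $\ge|w|$; if $|w|$ is a multiple of $k$, the only $k$-rounding of $w$ is $w$ itself. $\sigma$ is strongly erasing if for every $w\in\{0,1\}^*$ there exist $n\in\mathbb N$ and words $r_0,\dots,r_{n-1}$ such that $r_0$ is a $k$-rounding of $w$, $r_j$ is a $k$-rounding of $\sigma(r_{j-1})$ for $1\le j\le n-1$, and $\sigma(r_{n-1})=\epsilon$. The map $f_\sigma:\mathbb I\to\mathbb I$ is defined by $f_\sigma(x)=0.\sigma(\widetilde x)$ if $x\in(0,1]$ and $\widetilde x\neq w_\epsilon^\infty$, and $f_\sigma(x)=0$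 otherwise. Optimality condition: every $w\in\{0,1\}^\omega$ can be written as $w=\prod_{i\ge1}\sigma(b_i)$ with blocks $b_i\in\{0,1\}^k$ satisfying $\sigma(b_i)\ne\epsilon$. *)

theory Defs
  imports "HOL-Analysis.Analysis"
begin

text \<open>Binary digits are booleans (True = 1). Finite words: bool list; infinite words: nat => bool
  (index 0 is the first letter).\<close>

definition binval :: "bool list \<Rightarrow> real" where
  "binval w = (\<Sum>i<length w. (if w ! i then 1 else 0) / 2 ^ (i + 1))"

definition binval_inf :: "(nat \<Rightarrow> bool) \<Rightarrow> real" where
  "binval_inf w = (\<Sum>i. (if w i then 1 else 0) / 2 ^ (i + 1))"

text \<open>The unique infinite binary expansion of x in (0,1] not ending in 0^omega.\<close>
definition tilde :: "real \<Rightarrow> (nat \<Rightarrow> bool)" where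
  "tilde x = (THE w. (\<forall>n. \<exists>m>n. w m) \<and> binval_inf w = x)"

text \<open>A substitution is a map sigma on words; only its values on blocks of length k matter.\<close>
definition erasing_subst :: "nat \<Rightarrow> (bool list \<Rightarrow> bool list) \<Rightarrow> bool" where
  "erasing_subst k \<sigma> \<longleftrightarrow> 2 \<le> k \<and> (\<exists>!b. length b = k \<and> \<sigma> b = [])"

definition w_eps :: "nat \<Rightarrow> (bool list \<Rightarrow> bool list) \<Rightarrow> bool list" where
  "w_eps k \<sigma> = (THE b. length b = k \<and> \<sigma> b = [])"

definition subst_fin :: "nat \<Rightarrow> (bool list \<Rightarrow> bool list) \<Rightarrow> bool list \<Rightarrow> bool list" where
  "subst_fin k \<sigma> w = concat (map (\<lambda>i. \<sigma> (take k (drop (i * k) w))) [0..<length w div k])"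

definition block :: "nat \<Rightarrow> (nat \<Rightarrow> bool) \<Rightarrow> nat \<Rightarrow> bool list" where
  "block k w i = map w [i * k..<(i + 1) * k]"

definition concat_val :: "(nat \<Rightarrow> bool list) \<Rightarrow> real" where
  "concat_val u = (\<Sum>i. binval (u i) / 2 ^ length (concat (map u [0..<i])))"

definition is_inf_concat :: "(nat \<Rightarrow> bool) \<Rightarrow> (nat \<Rightarrow> bool list) \<Rightarrow> bool" where
  "is_inf_concat w u \<longleftrightarrow>
     (\<forall>n. map w [0..<length (concat (map u [0..<n]))] = concat (map u [0..<n]))"

definition k_rounding :: "nat \<Rightarrow> bool list \<Rightarrow> bool list \<Rightarrow> bool" where
  "k_rounding k w r \<longleftrightarrow> take (length w) r = w \<and> length w \<le> length r \<and> k dvd length r \<and>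
     (\<forall>m. k dvd m \<and> length w \<le> m \<longrightarrow> length r \<le> m)"

definition strongly_erasing :: "nat \<Rightarrow> (bool list \<Rightarrow> bool list) \<Rightarrow> bool" where
  "strongly_erasing k \<sigma> \<longleftrightarrow>
     (\<forall>w. \<exists>rs. rs \<noteq> [] \<and> k_rounding k w (rs ! 0) \<and>
        (\<forall>j. 1 \<le> j \<and> j < length rs \<longrightarrow> k_rounding k (subst_fin k \<sigma> (rs ! (j - 1))) (rs ! j)) \<and>
        subst_fin k \<sigma> (last rs) = [])"

definition f_sigma :: "nat \<Rightarrow> (bool list \<Rightarrow> bool list) \<Rightarrow> real \<Rightarrow> real" where
  "f_sigma k \<sigma> x =
     (if 0 < x \<and> x \<le> 1 \<and> tilde x \<noteq> (\<lambda>n. w_eps k \<sigma> ! (n mod k))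
      then concat_val (\<lambda>i. \<sigma> (block k (tilde x) i)) else 0)"

definition optimal :: "nat \<Rightarrow> (bool list \<Rightarrow> bool list) \<Rightarrow> bool" where
  "optimal k \<sigma> \<longleftrightarrow>
     (\<forall>w :: nat \<Rightarrow> bool. \<exists>b :: nat \<Rightarrow> bool list.
        (\<forall>i. length (b i) = k \<and> \<sigma> (b i) \<noteq> []) \<and> is_inf_concat w (\<lambda>i. \<sigma> (b i)))"

end

theory Submission
  imports Defs
begin

definition cl :: "(nat \<Rightarrow> bool list) \<Rightarrow> nat \<Rightarrow> bool list" where
  "cl u n = concat (map u [0..<n])"

lemma cl_0[simp]: "cl u 0 = []" by (simp add: cl_def)
lemma cl_Suc[simp]: "cl u (Suc n) = cl u n @ u n" by (simp add: cl_def)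

lemma cl_mono: "n \<le> n' \<Longrightarrow> \<exists>c. cl u n' = cl u n @ c"
proof (induction n' )
  case 0 then show ?case by simp
next
  case (Suc n') then show ?case
  proof (cases "n = Suc n'")
    case True then show ?thesis by (rule_tac x="[]" in exI) simp
  next
    case False
    then have "n \<le> n'" using Suc.prems by simp
    then obtain c where "cl u n' = cl u n @ c" using Suc.IH by blast
    then show ?thesis by (rule_tac x="c @ u n'" in exI) simp
  qed
qed

lemma cl_len_mono: "n \<le> n' \<Longrightarrow> length (cl u n) \<le> length (cl u n')"
  by (metis cl_mono length_append le_add1)

definition Sw :: "(nat \<Rightarrow> bool list) \<Rightarrow> nat \<Rightarrow> bool" where
  "Sw u j = (if (\<exists>N. j < length (cl u N)) then cl u (LEAST N. j < length (cl u N)) ! j else False)"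

lemma Sw_nth: assumes "j < length (cl u N)" shows "Sw u j = cl u N ! j"
proof -
  let ?N0 = "LEAST N. j < length (cl u N)"
  have h: "j < length (cl u ?N0)" using assms by (rule LeastI)
  have "?N0 \<le> N" using assms by (rule Least_le)
  then obtain c where "cl u N = cl u ?N0 @ c" using cl_mono[of ?N0 N u] by blast
  then have "cl u N ! j = cl u ?N0 ! j" using h by (simp add: nth_append)
  moreover have "\<exists>N. j < length (cl u N)" using assms by blast
  then have "Sw u j = cl u ?N0 ! j" unfolding Sw_def by (rule if_P)
  ultimately show ?thesis by simp
qed

lemma Sw_pre: "map (Sw u) [0..<length (cl u n)] = cl u n"
  by (rule nth_equalityI) (auto simp: Sw_nth)

lemma Sw_inf_concat: "is_inf_concat (Sw u) u"
  unfolding is_inf_concat_def using Sw_pre by (simp add: cl_def)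

lemma inf_concat_unique:
  assumes "is_inf_concat Y u" "\<And>M. \<exists>n. M \<le> length (cl u n)"
  shows "Y = Sw u"
proof
  fix j
  obtain n where n: "Suc j \<le> length (cl u n)" using assms(2) by blast
  have "map Y [0..<length (cl u n)] = cl u n" using assms(1) by (simp add: is_inf_concat_def cl_def)
  then have "Y j = cl u n ! j" using n
    by (metis Suc_le_eq add_0 diff_zero nth_map_upt)
  then show "Y j = Sw u j" using n Sw_nth[of j u n] by simp
qed

lemma cl_unbounded:
  assumes "\<And>c. \<exists>i\<ge>c. u i \<noteq> []"
  shows "\<exists>n. M \<le> length (cl u n)"
proof (induction M)
  case 0 then show ?case by simp
next
  case (Suc M)
  then obtain n where n: "M \<le> length (cl u n)" by blast
  obtain i where i: "i \<ge> n" "u i \<noteq> []" using assms by blast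
  have "length (cl u n) \<le> length (cl u i)" using i cl_len_mono by blast
  then have "Suc M \<le> length (cl u (Suc i))" using n i by (cases "u i") auto
  then show ?case by blast
qed



definition tm :: "(nat \<Rightarrow> bool) \<Rightarrow> nat \<Rightarrow> real" where
  "tm X i = (if X i then 1 else 0) / 2 ^ (i + 1)"

lemma tm_nonneg: "0 \<le> tm X i" by (simp add: tm_def)
lemma tm_le: "tm X i \<le> (1/2) ^ (i + 1)" by (simp add: tm_def power_one_over)
lemma tm_True: "X i \<Longrightarrow> tm X i = (1/2) ^ (i + 1)" by (simp add: tm_def power_one_over)

lemma summable_tm: "summable (tm X)"
proof (rule summable_comparison_test')
  show "summable (\<lambda>i. (1/2::real) ^ (i + 1))" by (simp add: summable_geometric)
  show "\<And>n. 0 \<le> n \<Longrightarrow> norm (tm X n) \<le> (1/2) ^ (n + 1)" using tm_le tm_nonneg by simp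
qed

lemma val_def': "binval_inf X = suminf (tm X)"
  unfolding binval_inf_def by (rule arg_cong[where f=suminf]) (simp add: tm_def fun_eq_iff)

lemma val_ge_partial: "(\<Sum>i<n. tm X i) \<le> binval_inf X"
  unfolding val_def' by (rule sum_le_suminf[OF summable_tm]) (auto simp: tm_nonneg)

lemma geo_tail: "(\<Sum>i. (1/2::real) ^ (i + n + 1)) = (1/2) ^ n"
proof -
  have e: "(\<lambda>i. (1/2::real) ^ (i + n + 1)) = (\<lambda>i. (1/2)^(n+1) * (1/2)^i)"
    by (simp add: power_add mult.commute)
  have "(\<lambda>i. (1/2::real)^i) sums 2" using geometric_sums[of "1/2::real"] by simp
  then have "(\<lambda>i. (1/2::real)^(n+1) * (1/2)^i) sums ((1/2)^(n+1) * 2)" by (rule sums_mult)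
  then have "(\<Sum>i. (1/2::real)^(n+1) * (1/2)^i) = (1/2)^(n+1) * 2" by (rule sums_unique[symmetric])
  then show ?thesis unfolding e by simp
qed

lemma val_le_partial: "binval_inf X \<le> (\<Sum>i<n. tm X i) + (1/2) ^ n"
proof -
  have "binval_inf X = (\<Sum>i. tm X (i + n)) + (\<Sum>i<n. tm X i)"
    unfolding val_def' by (rule suminf_split_initial_segment[OF summable_tm])
  moreover have "(\<Sum>i. tm X (i + n)) \<le> (\<Sum>i. (1/2::real) ^ (i + n + 1))"
  proof (rule suminf_le)
    show "\<And>i. tm X (i + n) \<le> (1/2) ^ (i + n + 1)" using tm_le by simp
    show "summable (\<lambda>i. tm X (i + n))" using summable_tm by (simp add: summable_iff_shift)
    show "summable (\<lambda>i. (1/2::real) ^ (i + n + 1))"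
      using summable_geometric[of "1/2::real"] summable_iff_shift[of "\<lambda>i. (1/2::real)^i" "n+1"]
      by (simp add: add.assoc)
  qed
  ultimately show ?thesis using geo_tail[of n] by simp
qed

lemma binval_map: "binval (map X [0..<n]) = (\<Sum>i<n. tm X i)"
  unfolding binval_def tm_def by simp

lemma sum_tm_mono_extra:
  assumes "n \<le> m"
  shows "(\<Sum>i<n. tm X i) + tm X m \<le> (\<Sum>i<Suc m. tm X i)"
proof -
  have "(\<Sum>i<n. tm X i) + tm X m = (\<Sum>i\<in>insert m {..<n}. tm X i)"
    using assms by simp
  also have "\<dots> \<le> (\<Sum>i<Suc m. tm X i)"
    by (rule sum_mono2) (use assms in \<open>auto simp: tm_nonneg\<close>)
  finally show ?thesis .
qed

definition iot :: "(nat \<Rightarrow> bool) \<Rightarrow> bool" where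
  "iot X \<longleftrightarrow> (\<forall>n. \<exists>m>n. X m)"

lemma val_less:
  assumes "\<forall>i<n. X i = Y i" "\<not> X n" "Y n" "iot Y"
  shows "binval_inf X < binval_inf Y"
proof -
  obtain m where m: "m > n" "Y m" using assms(4) unfolding iot_def by blast
  have eq: "(\<Sum>i<n. tm X i) = (\<Sum>i<n. tm Y i)" using assms(1) by (simp add: tm_def)
  have "binval_inf X \<le> (\<Sum>i<Suc n. tm X i) + (1/2) ^ Suc n" by (rule val_le_partial)
  also have "\<dots> = (\<Sum>i<n. tm Y i) + (1/2) ^ Suc n" using eq assms(2) by (simp add: tm_def)
  also have "\<dots> < (\<Sum>i<n. tm Y i) + tm Y n + tm Y m"
    using tm_True[of Y n] tm_True[of Y m] assms(3) m(2) by simp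
  also have "\<dots> \<le> (\<Sum>i<Suc n. tm Y i) + tm Y m" by simp
  also have "\<dots> \<le> (\<Sum>i<Suc m. tm Y i)" using sum_tm_mono_extra[of "Suc n" m Y] m by simp
  also have "\<dots> \<le> binval_inf Y" by (rule val_ge_partial)
  finally show ?thesis .
qed

lemma val_inj:
  assumes "iot X" "iot Y" "binval_inf X = binval_inf Y"
  shows "X = Y"
proof (rule ccontr)
  assume "X \<noteq> Y"
  then have ex: "\<exists>n. X n \<noteq> Y n" by auto
  define n where "n = (LEAST n. X n \<noteq> Y n)"
  have d: "X n \<noteq> Y n" unfolding n_def using ex by (rule LeastI_ex)
  have b: "\<forall>i<n. X i = Y i" unfolding n_def using not_less_Least by blast
  show False
  proof (cases "X n")
    case True
    then have "binval_inf Y < binval_inf X" using d b assms(1) val_less[of n Y X] by auto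
    then show False using assms(3) by simp
  next
    case False
    then have "binval_inf X < binval_inf Y" using d b assms(2) val_less[of n X Y] by auto
    then show False using assms(3) by simp
  qed
qed

lemma tilde_val: assumes "iot X" shows "tilde (binval_inf X) = X"
  unfolding tilde_def
proof (rule the_equality)
  show "(\<forall>n. \<exists>m>n. X m) \<and> binval_inf X = binval_inf X" using assms by (simp add: iot_def)
  fix w assume "(\<forall>n. \<exists>m>n. w m) \<and> binval_inf w = binval_inf X"
  then show "w = X" using val_inj[of w X] assms by (auto simp: iot_def)
qed

lemma val_pos: assumes "iot X" shows "0 < binval_inf X"
proof -
  obtain m where "X m" using assms unfolding iot_def by blast
  then have "0 < tm X m" by (simp add: tm_def)
  then have "0 < (\<Sum>i<Suc m. tm X i)"
    using sum_tm_mono_extra[of 0 m X] by simp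
  then show ?thesis using val_ge_partial[where n="Suc m" and X=X] by linarith
qed

lemma val_le1: "binval_inf X \<le> 1"
  using val_le_partial[where X=X and n=0] by simp

lemma val_ge0: "0 \<le> binval_inf X"
  using val_ge_partial[where X=X and n=0] by simp

lemma val_prefix:
  assumes "map X [0..<length v] = v"
  shows "binval v \<le> binval_inf X \<and> binval_inf X \<le> binval v + (1/2) ^ length v"
  using val_ge_partial[where n="length v" and X=X] val_le_partial[where X=X and n="length v"]
    binval_map[of X "length v"] assms by simp

lemma binval_Cons: "binval (b # w) = (if b then 1 else 0) / 2 + binval w / 2"
  unfolding binval_def length_Cons sum.lessThan_Suc_shift
  by (simp add: sum_divide_distrib)

lemma binval_append: "binval (a @ b) = binval a + binval b / 2 ^ length a"
  by (induction a) (auto simp: binval_Cons binval_def[of "[]"] field_simps)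



lemma binval_Nil[simp]: "binval [] = 0" by (simp add: binval_def)

lemma binval_cl: "binval (cl u n) = (\<Sum>i<n. binval (u i) / 2 ^ length (cl u i))"
  by (induction n) (auto simp: binval_append)

lemma concat_val_eq:
  assumes "is_inf_concat Y u" "\<And>M. \<exists>n. M \<le> length (cl u n)"
  shows "concat_val u = binval_inf Y"
proof -
  have pre: "map Y [0..<length (cl u n)] = cl u n" for n
    using assms(1) by (simp add: is_inf_concat_def cl_def)
  have ps: "(\<Sum>i<n. binval (u i) / 2 ^ length (concat (map u [0..<i]))) = (\<Sum>i<length (cl u n). tm Y i)" for n
    using binval_cl[of u n] binval_map[of Y "length (cl u n)"] pre[of n] by (simp add: cl_def)
  have lim: "(\<lambda>n. \<Sum>i<n. tm Y i) \<longlonglongrightarrow> binval_inf Y"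
    unfolding val_def' by (rule summable_LIMSEQ[OF summable_tm])
  have L: "filterlim (\<lambda>n. length (cl u n)) at_top sequentially"
    unfolding filterlim_at_top
  proof
    fix Z
    obtain n where "Z \<le> length (cl u n)" using assms(2) by blast
    then show "eventually (\<lambda>x. Z \<le> length (cl u x)) sequentially"
      unfolding eventually_sequentially using cl_len_mono[of n _ u] by (meson order_trans)
  qed
  have "(\<lambda>n. \<Sum>i<length (cl u n). tm Y i) \<longlonglongrightarrow> binval_inf Y"
    using filterlim_compose[OF lim L] by simp
  then have "(\<lambda>i. binval (u i) / 2 ^ length (concat (map u [0..<i]))) sums binval_inf Y"
    unfolding sums_def ps .
  then show ?thesis unfolding concat_val_def by (rule sums_unique[symmetric])
qed

lemma binrep: "m < 2 ^ L \<Longrightarrow> \<exists>v. length v = L \<and> binval v = real m / 2 ^ L"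
proof (induction L arbitrary: m)
  case 0 then show ?case by (simp add: binval_def)
next
  case (Suc L)
  show ?case
  proof (cases "m < 2 ^ L")
    case True
    then obtain v where v: "length v = L" "binval v = real m / 2 ^ L" using Suc.IH by blast
    then show ?thesis by (rule_tac x="False # v" in exI) (simp add: binval_Cons)
  next
    case False
    then have "m - 2 ^ L < 2 ^ L" using Suc.prems by simp
    then obtain v where v: "length v = L" "binval v = real (m - 2 ^ L) / 2 ^ L" using Suc.IH by blast
    have "real (m - 2 ^ L) = real m - 2 ^ L" using False by (simp add: of_nat_diff)
    then have "binval (True # v) = real m / 2 ^ Suc L" using v
      by (simp add: binval_Cons field_simps)
    then show ?thesis using v by (rule_tac x="True # v" in exI) simp
  qed
qed

lemma approx_word:
  assumes "0 \<le> y" "y \<le> 1"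
  shows "\<exists>v. length v = L \<and> \<bar>binval v - y\<bar> \<le> (1/2) ^ L"
proof -
  define m where "m = min (nat \<lfloor>y * 2 ^ L\<rfloor>) (2 ^ L - 1)"
  have pos: "(1::nat) \<le> 2 ^ L" by simp
  have m: "m < 2 ^ L" unfolding m_def using pos by linarith
  obtain v where v: "length v = L" "binval v = real m / 2 ^ L" using binrep[OF m] by blast
  have f1: "real_of_int \<lfloor>y * 2 ^ L\<rfloor> \<le> y * 2 ^ L" by (rule of_int_floor_le)
  have f2: "y * 2 ^ L < real_of_int \<lfloor>y * 2 ^ L\<rfloor> + 1" by (rule real_of_int_floor_add_one_gt)
  have fl0: "0 \<le> \<lfloor>y * 2 ^ L\<rfloor>" using assms by simp
  have y2: "y * 2 ^ L \<le> 2 ^ L" using assms by simp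
  have "real m \<le> y * 2 ^ L \<and> y * 2 ^ L \<le> real m + 1"
  proof (cases "nat \<lfloor>y * 2 ^ L\<rfloor> \<le> 2 ^ L - 1")
    case True
    then have "m = nat \<lfloor>y * 2 ^ L\<rfloor>" unfolding m_def by simp
    then have "real m = real_of_int \<lfloor>y * 2 ^ L\<rfloor>" using fl0 by simp
    then show ?thesis using f1 f2 by simp
  next
    case False
    then have "m = 2 ^ L - 1" unfolding m_def by simp
    then have "real m = 2 ^ L - 1" using pos by (simp add: of_nat_diff)
    moreover have "2 ^ L \<le> nat \<lfloor>y * 2 ^ L\<rfloor>" using False pos by linarith
    then have "int (2 ^ L) \<le> \<lfloor>y * 2 ^ L\<rfloor>" using fl0 by linarith
    then have "real_of_int \<lfloor>y * 2 ^ L\<rfloor> \<ge> 2 ^ L"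
      by (metis of_int_le_iff of_int_of_nat_eq of_nat_numeral of_nat_power)
    ultimately show ?thesis using f1 y2 by linarith
  qed
  then have a1: "\<bar>real m - y * 2 ^ L\<bar> \<le> 1" by linarith
  have "real m / 2 ^ L - y = (real m - y * 2 ^ L) / 2 ^ L"
    by (simp add: field_simps)
  then have "\<bar>real m / 2 ^ L - y\<bar> = \<bar>real m - y * 2 ^ L\<bar> / 2 ^ L"
    by (simp only: abs_divide) simp
  then have "\<bar>real m / 2 ^ L - y\<bar> \<le> 1 / 2 ^ L"
    using a1 by (simp add: divide_right_mono)
  then show ?thesis using v by (rule_tac x=v in exI) (simp add: power_one_over)
qed



definition SS :: "nat \<Rightarrow> (bool list \<Rightarrow> bool list) \<Rightarrow> (nat \<Rightarrow> bool) \<Rightarrow> (nat \<Rightarrow> bool)" where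
  "SS k \<sigma> X = Sw (\<lambda>i. \<sigma> (block k X i))"

definition good :: "nat \<Rightarrow> (bool list \<Rightarrow> bool list) \<Rightarrow> (nat \<Rightarrow> bool) \<Rightarrow> bool" where
  "good k \<sigma> X \<longleftrightarrow> iot X \<and> (\<forall>c. \<exists>i\<ge>c. \<sigma> (block k X i) \<noteq> [])"

lemma length_block[simp]: "length (block k X i) = k"
  by (simp add: block_def algebra_simps)

lemma block_nth: "j < k \<Longrightarrow> block k X i ! j = X (i * k + j)"
  by (simp add: block_def)

lemma weps:
  assumes "erasing_subst k \<sigma>"
  shows "2 \<le> k" "length (w_eps k \<sigma>) = k" "\<sigma> (w_eps k \<sigma>) = []"
    "\<And>b. length b = k \<Longrightarrow> \<sigma> b = [] \<Longrightarrow> b = w_eps k \<sigma>"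
proof -
  have ex: "\<exists>!b. length b = k \<and> \<sigma> b = []" using assms by (simp add: erasing_subst_def)
  have t: "length (w_eps k \<sigma>) = k \<and> \<sigma> (w_eps k \<sigma>) = []"
    unfolding w_eps_def using theI'[OF ex] .
  show "2 \<le> k" using assms by (simp add: erasing_subst_def)
  show "length (w_eps k \<sigma>) = k" "\<sigma> (w_eps k \<sigma>) = []" using t by auto
  show "\<And>b. length b = k \<Longrightarrow> \<sigma> b = [] \<Longrightarrow> b = w_eps k \<sigma>" using ex t by blast
qed

lemma subst_fin_pre:
  assumes "map X [0..<length P] = P"
  shows "subst_fin k \<sigma> P = cl (\<lambda>i. \<sigma> (block k X i)) (length P div k)"
  unfolding subst_fin_def cl_def
proof (rule arg_cong[where f=concat], rule map_cong[OF refl])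
  fix i assume "i \<in> set [0..<length P div k]"
  then have i: "i < length P div k" by simp
  then have le: "i * k + k \<le> length P"
    by (metis add.commute div_times_less_eq_dividend dual_order.trans mult.commute mult_Suc_right
        Suc_leI mult_le_mono1)
  have "take k (drop (i * k) P) = block k X i"
  proof (rule nth_equalityI)
    show "length (take k (drop (i * k) P)) = length (block k X i)" using le by simp
    fix j assume "j < length (take k (drop (i * k) P))"
    then have j: "j < k" using le by simp
    have "take k (drop (i * k) P) ! j = P ! (i * k + j)" using j le by simp
    also have "\<dots> = X (i * k + j)" using assms j le
      by (metis add_0 add_less_cancel_left diff_zero length_map length_upt nth_map_upt order_less_le_trans)
    finally show "take k (drop (i * k) P) ! j = block k X i ! j" using block_nth[OF j] by simp
  qed
  then show "\<sigma> (take k (drop (i * k) P)) = \<sigma> (block k X i)" by simp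
qed

lemma forward_pre:
  assumes "map X [0..<length P] = P"
  shows "map (SS k \<sigma> X) [0..<length (subst_fin k \<sigma> P)] = subst_fin k \<sigma> P"
  unfolding subst_fin_pre[OF assms] SS_def by (rule Sw_pre)

lemma good_unbounded:
  assumes "good k \<sigma> X"
  shows "\<exists>n. M \<le> length (cl (\<lambda>i. \<sigma> (block k X i)) n)"
  by (rule cl_unbounded) (use assms in \<open>auto simp: good_def\<close>)

lemma block_periodic:
  assumes "0 < k" "length w = k"
  shows "block k (\<lambda>n. w ! (n mod k)) i = w"
proof (rule nth_equalityI)
  show "length (block k (\<lambda>n. w ! (n mod k)) i) = length w" using assms by simp
  fix j assume "j < length (block k (\<lambda>n. w ! (n mod k)) i)"
  then have j: "j < k" by simp
  have "(i * k + j) mod k = j" using j by simp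
  then show "block k (\<lambda>n. w ! (n mod k)) i ! j = w ! j" using block_nth[OF j] by simp
qed

lemma f_sigma_good:
  assumes ES: "erasing_subst k \<sigma>" and G: "good k \<sigma> X"
  shows "f_sigma k \<sigma> (binval_inf X) = binval_inf (SS k \<sigma> X)"
proof -
  have I: "iot X" using G by (simp add: good_def)
  have tX: "tilde (binval_inf X) = X" using tilde_val[OF I] .
  have k0: "0 < k" using weps(1)[OF ES] by simp
  have ne: "X \<noteq> (\<lambda>n. w_eps k \<sigma> ! (n mod k))"
  proof
    assume eq: "X = (\<lambda>n. w_eps k \<sigma> ! (n mod k))"
    obtain i where "\<sigma> (block k X i) \<noteq> []" using G by (auto simp: good_def)
    moreover have "block k X i = w_eps k \<sigma>" unfolding eq by (rule block_periodic[OF k0 weps(2)[OF ES]])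
    ultimately show False using weps(3)[OF ES] by simp
  qed
  have "f_sigma k \<sigma> (binval_inf X) = concat_val (\<lambda>i. \<sigma> (block k X i))"
    unfolding f_sigma_def tX using val_pos[OF I] val_le1[of X] ne by simp
  also have "\<dots> = binval_inf (SS k \<sigma> X)"
    unfolding SS_def by (rule concat_val_eq[OF Sw_inf_concat good_unbounded[OF G]])
  finally show ?thesis .
qed



lemma map_upt_split: "map f [0..<a + b] = map f [0..<a] @ map (\<lambda>i. f (i + a)) [0..<b]"
  by (rule nth_equalityI) (auto simp: nth_append)

lemma take_map_upt: "m \<le> L \<Longrightarrow> take m (map f [0..<L]) = map f [0..<m]"
  by (simp add: take_map min_def)

lemma step_lemma:
  assumes ES: "erasing_subst k \<sigma>" and OPT: "optimal k \<sigma>"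
    and G: "good k \<sigma> Y" and dv: "k dvd length r"
    and pre: "map Y [0..<length (subst_fin k \<sigma> r)] = subst_fin k \<sigma> r"
  shows "\<exists>z. map z [0..<length r] = r \<and> SS k \<sigma> z = Y \<and> good k \<sigma> z"
proof -
  have k2: "2 \<le> k" by (rule weps(1)[OF ES])
  define we where "we = w_eps k \<sigma>"
  have we: "length we = k" "\<sigma> we = []" "\<And>b. length b = k \<Longrightarrow> \<sigma> b = [] \<Longrightarrow> b = we"
    unfolding we_def using weps(2,3)[OF ES] apply - apply blast apply blast
    using weps(4)[OF ES] by blast
  define d where "d = length (subst_fin k \<sigma> r)"
  define Y' where "Y' = (\<lambda>i. Y (i + d))"
  obtain b where b: "\<forall>i. length (b i) = k \<and> \<sigma> (b i) \<noteq> []" "is_inf_concat Y' (\<lambda>i. \<sigma> (b i))"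
    using OPT unfolding optimal_def by blast
  define q where "q = length r div k"
  have rq: "length r = q * k" unfolding q_def using dv by simp
  define B where "B i = (if i < q then take k (drop (i * k) r)
                     else if even (i - q) then we else b ((i - q) div 2))" for i
  have lenB: "length (B i) = k" for i
  proof (cases "i < q")
    case True
    then have "i * k + k \<le> length r" unfolding rq
      by (metis Suc_leI add.commute mult_Suc mult_le_mono1)
    then show ?thesis using True unfolding B_def by simp
  next
    case False then show ?thesis unfolding B_def using we(1) b(1) by auto
  qed
  define z where "z j = B (j div k) ! (j mod k)" for j
  have blockz: "block k z i = B i" for i
  proof (rule nth_equalityI)
    show "length (block k z i) = length (B i)" using lenB by simp
    fix j assume "j < length (block k z i)"
    then have j: "j < k" by simp
    have "(i * k + j) div k = i" "(i * k + j) mod k = j" using j by auto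
    then show "block k z i ! j = B i ! j" using block_nth[OF j] unfolding z_def by simp
  qed
  have prez: "map z [0..<length r] = r"
  proof (rule nth_equalityI)
    show "length (map z [0..<length r]) = length r" by simp
    fix j assume "j < length (map z [0..<length r])"
    then have j: "j < length r" by simp
    have jq: "j div k < q" using j unfolding rq
      by (simp add: less_mult_imp_div_less)
    have jm: "j mod k < k" using k2 by simp
    have zj: "z j = take k (drop ((j div k) * k) r) ! (j mod k)" unfolding z_def B_def using jq by simp
    have h: "j div k * k \<le> length r" using j div_times_less_eq_dividend[of j k] by linarith
    have h2: "take k (drop ((j div k) * k) r) ! (j mod k) = r ! ((j div k) * k + j mod k)"
      using jm h by simp
    have "(j div k) * k + j mod k = j" by simp
    then show "map z [0..<length r] ! j = r ! j" using j zj h2 by simp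
  qed
  define u where "u i = \<sigma> (B i)" for i
  have clq: "cl u q = subst_fin k \<sigma> r"
    unfolding subst_fin_def cl_def u_def q_def[symmetric]
    by (rule arg_cong[where f=concat], rule map_cong) (auto simp: B_def)
  have clqm: "cl u (q + m) = cl u q @ cl (\<lambda>i. \<sigma> (b i)) (m div 2)" for m
  proof (induction m)
    case 0 then show ?case by simp
  next
    case (Suc m)
    show ?case
    proof (cases "even m")
      case True
      then have "Suc m div 2 = m div 2" by presburger
      moreover have "u (q + m) = []" using True unfolding u_def B_def using we(2) by simp
      ultimately show ?thesis using Suc.IH by simp
    next
      case False
      then have "Suc m div 2 = Suc (m div 2)" by presburger
      moreover have "u (q + m) = \<sigma> (b (m div 2))" using False unfolding u_def B_def by simp
      ultimately show ?thesis using Suc.IH by simp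
    qed
  qed
  have preY': "map Y' [0..<length (cl (\<lambda>i. \<sigma> (b i)) n)] = cl (\<lambda>i. \<sigma> (b i)) n" for n
    using b(2) by (simp add: is_inf_concat_def cl_def)
  have inf: "is_inf_concat Y u"
    unfolding is_inf_concat_def cl_def[symmetric]
  proof
    fix n
    show "map Y [0..<length (cl u n)] = cl u n"
    proof (cases "n \<le> q")
      case True
      then obtain c where c: "cl u q = cl u n @ c" using cl_mono[of n q u] by blast
      have "map Y [0..<length (cl u q)] = cl u q" using pre clq unfolding d_def by simp
      then have "take (length (cl u n)) (map Y [0..<length (cl u q)]) = cl u n" using c by simp
      then show ?thesis using c by (simp add: take_map_upt)
    next
      case False
      define m where "m = n - q"
      have m: "n = q + m" using False unfolding m_def by simp
      have "map Y [0..<length (cl u n)] =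
            map Y [0..<d] @ map Y' [0..<length (cl (\<lambda>i. \<sigma> (b i)) (m div 2))]"
        unfolding m clqm clq d_def Y'_def by (simp add: map_upt_split[of Y] add.commute)
      also have "\<dots> = cl u n" unfolding m clqm clq preY' using pre d_def by simp
      finally show ?thesis .
    qed
  qed
  have uinf: "\<exists>i\<ge>c. u i \<noteq> []" for c
  proof -
    have "u (q + Suc (2 * c)) = \<sigma> (b c)" unfolding u_def B_def by simp
    then show ?thesis using b(1) by (rule_tac x="q + Suc (2 * c)" in exI) simp
  qed
  have SSz: "SS k \<sigma> z = Y"
    unfolding SS_def blockz u_def[symmetric]
    by (rule inf_concat_unique[OF inf cl_unbounded[OF uinf], symmetric])
  have iotz: "iot z" unfolding iot_def
  proof
    fix n
    define \<beta> where "\<beta> = q + 2 * Suc n"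
    have "\<beta> \<le> \<beta> * k" using k2 by simp
    moreover have "n < \<beta>" unfolding \<beta>_def by simp
    ultimately have \<beta>k: "n < \<beta> * k" by linarith
    show "\<exists>m>n. z m"
    proof (cases "\<exists>j<k. we ! j")
      case True
      then obtain j where j: "j < k" "we ! j" by blast
      have "z (\<beta> * k + j) = B \<beta> ! j" using block_nth[OF j(1), of z \<beta>] blockz by simp
      also have "B \<beta> = we" unfolding B_def \<beta>_def by simp
      finally show ?thesis using j \<beta>k by (rule_tac x="\<beta> * k + j" in exI) simp
    next
      case False
      have "\<exists>j<k. b (Suc n) ! j"
      proof (rule ccontr)
        assume "\<not> (\<exists>j<k. b (Suc n) ! j)"
        then have "b (Suc n) = we"
          by (intro nth_equalityI) (use False b(1) we(1) in auto)
        then show False using b(1) we(2) by metis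
      qed
      then obtain j where j: "j < k" "b (Suc n) ! j" by blast
      have "z (Suc \<beta> * k + j) = B (Suc \<beta>) ! j" using block_nth[OF j(1), of z "Suc \<beta>"] blockz by simp
      also have "B (Suc \<beta>) = b (Suc n)" unfolding B_def \<beta>_def by simp
      finally show ?thesis using j \<beta>k by (rule_tac x="Suc \<beta> * k + j" in exI) simp
    qed
  qed
  have "good k \<sigma> z" unfolding good_def blockz
    using iotz uinf unfolding u_def by blast
  then show ?thesis using prez SSz by blast
qed



fun chainok :: "nat \<Rightarrow> (bool list \<Rightarrow> bool list) \<Rightarrow> bool list list \<Rightarrow> bool" where
  "chainok k \<sigma> [] = True"
| "chainok k \<sigma> [r] = (k dvd length r \<and> subst_fin k \<sigma> r = [])"
| "chainok k \<sigma> (r # r' # R) = (k dvd length r \<and> (\<exists>c. r' = subst_fin k \<sigma> r @ c) \<and> chainok k \<sigma> (r' # R))"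

lemma subst_fin_Nil[simp]: "subst_fin k \<sigma> [] = []" by (simp add: subst_fin_def)

lemma chainok_append: "chainok k \<sigma> A \<Longrightarrow> chainok k \<sigma> B \<Longrightarrow> A \<noteq> [] \<Longrightarrow> chainok k \<sigma> (A @ B)"
proof (induction A)
  case Nil then show ?case by simp
next
  case (Cons r A)
  show ?case
  proof (cases A)
    case Nil
    then show ?thesis using Cons.prems by (cases B) auto
  next
    case (Cons r' A')
    then show ?thesis using Cons.prems Cons.IH[of ] by auto
  qed
qed

lemma chainok_rep: "chainok k \<sigma> (replicate n [])"
proof (induction n)
  case 0 then show ?case by simp
next
  case (Suc n) then show ?case by (cases n) auto
qed

lemma chainok_from_rounding:
  "rs \<noteq> [] \<Longrightarrow> (\<forall>j. 1 \<le> j \<and> j < length rs \<longrightarrow> k_rounding k (subst_fin k \<sigma> (rs ! (j - 1))) (rs ! j))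
   \<Longrightarrow> k dvd length (rs ! 0) \<Longrightarrow> subst_fin k \<sigma> (last rs) = [] \<Longrightarrow> chainok k \<sigma> rs"
proof (induction rs)
  case Nil then show ?case by simp
next
  case (Cons r rs)
  show ?case
  proof (cases rs)
    case Nil then show ?thesis using Cons.prems by simp
  next
    case (Cons r' rs')
    have kr: "k_rounding k (subst_fin k \<sigma> r) r'"
      using Cons.prems(2)[rule_format, of 1] Cons by simp
    then have pf: "\<exists>c. r' = subst_fin k \<sigma> r @ c" unfolding k_rounding_def
      by (metis append_take_drop_id)
    have dv: "k dvd length r'" using kr unfolding k_rounding_def by simp
    have "chainok k \<sigma> rs"
    proof (rule Cons.IH)
      show "rs \<noteq> []" using Cons by simp
      show "\<forall>j. 1 \<le> j \<and> j < length rs \<longrightarrow> k_rounding k (subst_fin k \<sigma> (rs ! (j - 1))) (rs ! j)"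
      proof (intro allI impI)
        fix j assume j: "1 \<le> j \<and> j < length rs"
        obtain j' where j': "j = Suc j'" using j by (cases j) auto
        have "1 \<le> Suc j \<and> Suc j < length (r # rs)" using j by simp
        then have "k_rounding k (subst_fin k \<sigma> ((r # rs) ! (Suc j - 1))) ((r # rs) ! Suc j)"
          using Cons.prems(2) by blast
        moreover have "(r # rs) ! (Suc j - 1) = rs ! (j - 1)" using j' by simp
        moreover have "(r # rs) ! Suc j = rs ! j" by simp
        ultimately show "k_rounding k (subst_fin k \<sigma> (rs ! (j - 1))) (rs ! j)" by simp
      qed
      show "k dvd length (rs ! 0)" using dv Cons by simp
      show "subst_fin k \<sigma> (last rs) = []" using Cons.prems(4) Cons by simp
    qed
    then show ?thesis using Cons.prems(3) pf Cons by simp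
  qed
qed

lemma chain_se:
  assumes "strongly_erasing k \<sigma>"
  shows "\<exists>rs. rs \<noteq> [] \<and> chainok k \<sigma> rs \<and> take (length w) (rs ! 0) = w \<and> length w \<le> length (rs ! 0)
            \<and> (k dvd length w \<longrightarrow> rs ! 0 = w)"
proof -
  obtain rs where rs: "rs \<noteq> []" "k_rounding k w (rs ! 0)"
    "\<forall>j. 1 \<le> j \<and> j < length rs \<longrightarrow> k_rounding k (subst_fin k \<sigma> (rs ! (j - 1))) (rs ! j)"
    "subst_fin k \<sigma> (last rs) = []"
    using assms unfolding strongly_erasing_def by blast
  have c: "chainok k \<sigma> rs"
    using chainok_from_rounding[OF rs(1) rs(3) _ rs(4)] rs(2) unfolding k_rounding_def by simp
  have "k dvd length w \<longrightarrow> rs ! 0 = w"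
  proof
    assume "k dvd length w"
    then have "length (rs ! 0) \<le> length w" using rs(2) unfolding k_rounding_def by blast
    then show "rs ! 0 = w" using rs(2) unfolding k_rounding_def
      by (metis take_all)
  qed
  then show ?thesis using rs c unfolding k_rounding_def by blast
qed

lemma ones_good:
  assumes ES: "erasing_subst k \<sigma>" and W1: "w_eps k \<sigma> \<noteq> replicate k True"
  shows "good k \<sigma> (\<lambda>_. True)"
proof -
  have bl: "block k (\<lambda>_. True) i = replicate k True" for i
    by (simp add: block_def map_replicate_const)
  have "\<sigma> (replicate k True) \<noteq> []"
    using weps(4)[OF ES, of "replicate k True"] W1 by auto
  then show ?thesis unfolding good_def iot_def bl by auto
qed

lemma backward:
  assumes ES: "erasing_subst k \<sigma>" and W1: "w_eps k \<sigma> \<noteq> replicate k True" and OPT: "optimal k \<sigma>"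
  shows "chainok k \<sigma> R \<Longrightarrow> R \<noteq> [] \<Longrightarrow> \<exists>Z. (\<forall>t<length R. map (Z t) [0..<length (R ! t)] = R ! t
           \<and> SS k \<sigma> (Z t) = Z (Suc t)) \<and> (\<forall>t\<le>length R. good k \<sigma> (Z t))"
proof (induction R)
  case Nil then show ?case by simp
next
  case (Cons r R)
  show ?case
  proof (cases R)
    case Nil
    then have c: "k dvd length r" "subst_fin k \<sigma> r = []" using Cons.prems by auto
    obtain z where z: "map z [0..<length r] = r" "SS k \<sigma> z = (\<lambda>_. True)" "good k \<sigma> z"
      using step_lemma[OF ES OPT ones_good[OF ES W1] c(1)] c(2) by auto
    define Z where "Z t = (if t = 0 then z else (\<lambda>_. True))" for t :: nat
    have "(\<forall>t<length (r # R). map (Z t) [0..<length ((r # R) ! t)] = (r # R) ! t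
           \<and> SS k \<sigma> (Z t) = Z (Suc t)) \<and> (\<forall>t\<le>length (r # R). good k \<sigma> (Z t))"
      using z ones_good[OF ES W1] Nil unfolding Z_def by (auto simp: le_Suc_eq)
    then show ?thesis by blast
  next
    case (Cons r' R')
    have c: "k dvd length r" "\<exists>c. r' = subst_fin k \<sigma> r @ c" "chainok k \<sigma> R"
      using Cons.prems(1) Cons by auto
    obtain Z' where Z': "\<forall>t<length R. map (Z' t) [0..<length (R ! t)] = R ! t
           \<and> SS k \<sigma> (Z' t) = Z' (Suc t)" "\<forall>t\<le>length R. good k \<sigma> (Z' t)"
      using Cons.IH[OF c(3)] Cons by blast
    have m0: "map (Z' 0) [0..<length r'] = r'" using Z'(1) Cons by auto
    obtain c0 where c0: "r' = subst_fin k \<sigma> r @ c0" using c(2) by blast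
    have "take (length (subst_fin k \<sigma> r)) (map (Z' 0) [0..<length r']) = subst_fin k \<sigma> r"
      using m0 c0 by simp
    then have pre: "map (Z' 0) [0..<length (subst_fin k \<sigma> r)] = subst_fin k \<sigma> r"
      using c0 by (simp add: take_map_upt)
    obtain z where z: "map z [0..<length r] = r" "SS k \<sigma> z = Z' 0" "good k \<sigma> z"
      using step_lemma[OF ES OPT _ c(1) pre] Z'(2) by auto
    define Z where "Z t = (if t = 0 then z else Z' (t - 1))" for t
    have A: "\<forall>t<length (r # R). map (Z t) [0..<length ((r # R) ! t)] = (r # R) ! t
           \<and> SS k \<sigma> (Z t) = Z (Suc t)"
    proof (intro allI impI)
      fix t assume t: "t < length (r # R)"
      show "map (Z t) [0..<length ((r # R) ! t)] = (r # R) ! t \<and> SS k \<sigma> (Z t) = Z (Suc t)"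
      proof (cases t)
        case 0 then show ?thesis using z unfolding Z_def by simp
      next
        case (Suc t') then show ?thesis using Z'(1) t unfolding Z_def by simp
      qed
    qed
    have B: "\<forall>t\<le>length (r # R). good k \<sigma> (Z t)"
    proof (intro allI impI)
      fix t assume t: "t \<le> length (r # R)"
      show "good k \<sigma> (Z t)"
      proof (cases t)
        case 0 then show ?thesis using z unfolding Z_def by simp
      next
        case (Suc t') then show ?thesis using Z'(2) t unfolding Z_def by simp
      qed
    qed
    show ?thesis using A B by blast
  qed
qed

definition ind :: "nat \<Rightarrow> (bool list \<Rightarrow> bool list) \<Rightarrow> bool list \<Rightarrow> nat \<Rightarrow> bool list" where
  "ind k \<sigma> P t = (subst_fin k \<sigma> ^^ t) P"

lemma forward_ind:
  assumes "map X [0..<length P] = P"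
  shows "map ((SS k \<sigma> ^^ t) X) [0..<length (ind k \<sigma> P t)] = ind k \<sigma> P t"
proof (induction t)
  case 0 then show ?case using assms by (simp add: ind_def)
next
  case (Suc t) then show ?case using forward_pre[OF Suc.IH] by (simp add: ind_def)
qed

lemma growth:
  assumes G: "good k \<sigma> Y" and k0: "0 < k"
  shows "\<exists>N. \<forall>l\<ge>N. M \<le> length (subst_fin k \<sigma> (map Y [0..<l]))"
proof -
  obtain n where n: "M \<le> length (cl (\<lambda>i. \<sigma> (block k Y i)) n)" using good_unbounded[OF G] by blast
  have "M \<le> length (subst_fin k \<sigma> (map Y [0..<l]))" if l: "n * k \<le> l" for l
  proof -
    have "subst_fin k \<sigma> (map Y [0..<l]) = cl (\<lambda>i. \<sigma> (block k Y i)) (l div k)"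
      using subst_fin_pre[of Y "map Y [0..<l]"] by simp
    moreover have "n \<le> l div k" using div_le_mono[OF l, of k] k0 by simp
    ultimately show ?thesis using n cl_len_mono by (metis order_trans)
  qed
  then show ?thesis by blast
qed

lemma iter_Z:
  assumes "\<forall>t<L. SS k \<sigma> (Z t) = Z (Suc t)"
  shows "t \<le> L \<Longrightarrow> (SS k \<sigma> ^^ t) (Z 0) = Z t"
  by (induction t) (use assms in auto)

lemma growth_ind:
  assumes k0: "0 < k" and S: "\<forall>t<L. SS k \<sigma> (Z t) = Z (Suc t)" and G: "\<forall>t\<le>L. good k \<sigma> (Z t)"
  shows "t \<le> L \<Longrightarrow> \<exists>N. \<forall>q\<ge>N. M \<le> length (ind k \<sigma> (map (Z 0) [0..<k * q]) t)"
proof (induction t arbitrary: M)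
  case 0
  have "M \<le> length (ind k \<sigma> (map (Z 0) [0..<k * q]) 0)" if "M \<le> q" for q
  proof -
    have "q \<le> k * q" using k0 by simp
    then have "M \<le> k * q" using that by linarith
    then show ?thesis by (simp add: ind_def)
  qed
  then show ?case by blast
next
  case (Suc t)
  have tL: "t \<le> L" "t < L" using Suc.prems by auto
  obtain N where N: "\<forall>l\<ge>N. M \<le> length (subst_fin k \<sigma> (map (Z t) [0..<l]))"
    using growth[OF _ k0] G tL by blast
  obtain N' where N': "\<forall>q\<ge>N'. N \<le> length (ind k \<sigma> (map (Z 0) [0..<k * q]) t)"
    using Suc.IH[OF tL(1)] by blast
  have "M \<le> length (ind k \<sigma> (map (Z 0) [0..<k * q]) (Suc t))" if q: "q \<ge> N'" for q
  proof -
    let ?P = "map (Z 0) [0..<k * q]"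
    have "map ((SS k \<sigma> ^^ t) (Z 0)) [0..<length (ind k \<sigma> ?P t)] = ind k \<sigma> ?P t"
      by (rule forward_ind) simp
    then have e: "map (Z t) [0..<length (ind k \<sigma> ?P t)] = ind k \<sigma> ?P t"
      using iter_Z[OF S tL(1)] by simp
    have "ind k \<sigma> ?P (Suc t) = subst_fin k \<sigma> (ind k \<sigma> ?P t)" by (simp add: ind_def)
    then show ?thesis using N N' q e by metis
  qed
  then show ?case by blast
qed



lemma block_from_pre:
  assumes "map X [0..<length P] = P" "(i + 1) * k \<le> length P"
  shows "take k (drop (i * k) P) = block k X i"
proof (rule nth_equalityI)
  show "length (take k (drop (i * k) P)) = length (block k X i)" using assms(2) by simp
  fix j assume "j < length (take k (drop (i * k) P))"
  then have j: "j < k" using assms(2) by simp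
  have "i * k + j < length P" using j assms(2) by simp
  then have "take k (drop (i * k) P) ! j = P ! (i * k + j)" using j by simp
  also have "\<dots> = X (i * k + j)" using assms(1) \<open>i * k + j < length P\<close>
    by (metis add_0 diff_zero length_map length_upt nth_map_upt)
  finally show "take k (drop (i * k) P) ! j = block k X i ! j" using block_nth[OF j] by simp
qed

lemma pre_nth: "map X [0..<length P] = P \<Longrightarrow> i < length P \<Longrightarrow> P ! i = X i"
  by (metis add_0 diff_zero length_map length_upt nth_map_upt)

lemma extension:
  assumes ES: "erasing_subst k \<sigma>" and SE: "strongly_erasing k \<sigma>"
    and W1: "w_eps k \<sigma> \<noteq> replicate k True" and OPT: "optimal k \<sigma>"
    and dv: "k dvd length P"
  shows "\<exists>P'. (\<exists>c. P' = P @ c) \<and> k dvd length P' \<and> (\<exists>n c. ind k \<sigma> P' n = v @ c) \<and>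
     (\<forall>t\<le>T. (\<exists>i. T \<le> i \<and> i < length (ind k \<sigma> P' t) \<and> ind k \<sigma> P' t ! i) \<and>
       (\<exists>c. T \<le> c \<and> (c + 1) * k \<le> length (ind k \<sigma> P' t) \<and> \<sigma> (take k (drop (c * k) (ind k \<sigma> P' t))) \<noteq> []))"
proof -
  have k0: "0 < k" using weps(1)[OF ES] by simp
  obtain rs where rs: "rs \<noteq> []" "chainok k \<sigma> rs" "rs ! 0 = P"
    using chain_se[OF SE, of P] dv by blast
  obtain rs2 where rs2: "rs2 \<noteq> []" "chainok k \<sigma> rs2" "take (length v) (rs2 ! 0) = v"
    "length v \<le> length (rs2 ! 0)"
    using chain_se[OF SE, of v] by blast
  define R where "R = rs @ rs2 @ replicate T []"
  have cR: "chainok k \<sigma> R" unfolding R_def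
    by (rule chainok_append[OF rs(2) chainok_append[OF rs2(2) chainok_rep rs2(1)] rs(1)])
  define n where "n = length rs"
  define L where "L = length R"
  have R0: "R ! 0 = P" using rs unfolding R_def by (simp add: nth_append)
  have Rn: "R ! n = rs2 ! 0" using rs2(1) unfolding R_def n_def by (simp add: nth_append)
  have nL: "n < L" using rs2(1) unfolding L_def R_def n_def by simp
  have TL: "T \<le> L" using rs(1) unfolding L_def R_def by simp
  have RNe: "R \<noteq> []" unfolding R_def using rs(1) by simp
  obtain Z where Z1: "\<forall>t<L. map (Z t) [0..<length (R ! t)] = R ! t \<and> SS k \<sigma> (Z t) = Z (Suc t)"
    and Z2: "\<forall>t\<le>L. good k \<sigma> (Z t)"
    using backward[OF ES W1 OPT cR RNe] unfolding L_def by blast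
  have S: "\<forall>t<L. SS k \<sigma> (Z t) = Z (Suc t)" using Z1 by blast
  have "\<forall>t\<in>{..T}. \<exists>ic. T \<le> fst ic \<and> Z t (fst ic) \<and> T \<le> snd ic \<and> \<sigma> (block k (Z t) (snd ic)) \<noteq> []"
  proof
    fix t assume "t \<in> {..T}"
    then have g: "good k \<sigma> (Z t)" using Z2 TL by simp
    obtain i where i: "i > T" "Z t i" using g unfolding good_def iot_def by blast
    obtain c where c: "c \<ge> T" "\<sigma> (block k (Z t) c) \<noteq> []" using g unfolding good_def by blast
    show "\<exists>ic. T \<le> fst ic \<and> Z t (fst ic) \<and> T \<le> snd ic \<and> \<sigma> (block k (Z t) (snd ic)) \<noteq> []"
      using i c by (rule_tac x="(i, c)" in exI) simp
  qed
  then obtain f where f: "\<forall>t\<in>{..T}. T \<le> fst (f t) \<and> Z t (fst (f t)) \<and> T \<le> snd (f t) \<and> \<sigma> (block k (Z t) (snd (f t))) \<noteq> []"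
    by (rule bchoice[elim_format]) blast
  define M where "M = (\<Sum>t\<le>T. Suc (fst (f t)) + (snd (f t) + 1) * k) + length (rs2 ! 0)"
  have "\<forall>t\<in>{..L}. \<exists>N. \<forall>q\<ge>N. M \<le> length (ind k \<sigma> (map (Z 0) [0..<k * q]) t)"
    using growth_ind[OF k0 S Z2] by blast
  then obtain g where g: "\<forall>t\<in>{..L}. \<forall>q\<ge>g t. M \<le> length (ind k \<sigma> (map (Z 0) [0..<k * q]) t)"
    by (rule bchoice[elim_format]) blast
  define q where "q = (\<Sum>t\<le>L. g t) + length P"
  have qg: "g t \<le> q" if "t \<le> L" for t
  proof -
    have "g t \<le> (\<Sum>t\<le>L. g t)" by (rule member_le_sum) (use that in auto)
    then show ?thesis unfolding q_def by simp
  qed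
  define P' where "P' = map (Z 0) [0..<k * q]"
  have lenM: "M \<le> length (ind k \<sigma> P' t)" if "t \<le> L" for t
    using g qg[OF that] that unfolding P'_def by blast
  have fw: "map (Z t) [0..<length (ind k \<sigma> P' t)] = ind k \<sigma> P' t" if "t \<le> L" for t
  proof -
    have "map ((SS k \<sigma> ^^ t) (Z 0)) [0..<length (ind k \<sigma> P' t)] = ind k \<sigma> P' t"
      by (rule forward_ind) (simp add: P'_def)
    then show ?thesis using iter_Z[OF S that] by simp
  qed
  have "q \<le> k * q" using k0 by simp
  then have qP: "length P \<le> k * q" unfolding q_def by linarith
  have "map (Z 0) [0..<length (R ! 0)] = R ! 0" using Z1 nL by blast
  then have P0: "map (Z 0) [0..<length P] = P" using R0 by simp
  have A: "\<exists>c. P' = P @ c"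
  proof -
    have "take (length P) P' = P" unfolding P'_def using qP P0 by (simp add: take_map_upt)
    then show ?thesis by (metis append_take_drop_id)
  qed
  have B: "k dvd length P'" unfolding P'_def by simp
  have C: "\<exists>n c. ind k \<sigma> P' n = v @ c"
  proof -
    have l: "length (rs2 ! 0) \<le> length (ind k \<sigma> P' n)" using lenM[of n] nL unfolding M_def by simp
    have "map (Z n) [0..<length (R ! n)] = R ! n" using Z1 nL by blast
    then have "map (Z n) [0..<length (rs2 ! 0)] = rs2 ! 0" using Rn by simp
    moreover have "take (length (rs2 ! 0)) (ind k \<sigma> P' n) = map (Z n) [0..<length (rs2 ! 0)]"
      using fw[of n] nL l take_map_upt[OF l, of "Z n"] by simp
    ultimately have "take (length (rs2 ! 0)) (ind k \<sigma> P' n) = rs2 ! 0" by simp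
    then have "take (length v) (take (length (rs2 ! 0)) (ind k \<sigma> P' n)) = v" using rs2(3) by simp
    then have "take (length v) (ind k \<sigma> P' n) = v" using rs2(4) by (simp add: min_def)
    then show ?thesis by (metis append_take_drop_id)
  qed
  have D: "\<forall>t\<le>T. (\<exists>i. T \<le> i \<and> i < length (ind k \<sigma> P' t) \<and> ind k \<sigma> P' t ! i) \<and>
       (\<exists>c. T \<le> c \<and> (c + 1) * k \<le> length (ind k \<sigma> P' t) \<and> \<sigma> (take k (drop (c * k) (ind k \<sigma> P' t))) \<noteq> [])"
  proof (intro allI impI conjI)
    fix t assume t: "t \<le> T"
    then have tL: "t \<le> L" using TL by simp
    have ft: "T \<le> fst (f t) \<and> Z t (fst (f t)) \<and> T \<le> snd (f t) \<and> \<sigma> (block k (Z t) (snd (f t))) \<noteq> []"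
      using f t by simp
    have "Suc (fst (f t)) + (snd (f t) + 1) * k \<le> (\<Sum>t\<le>T. Suc (fst (f t)) + (snd (f t) + 1) * k)"
      by (rule member_le_sum) (use t in auto)
    then have le: "Suc (fst (f t)) + (snd (f t) + 1) * k \<le> length (ind k \<sigma> P' t)"
      using lenM[OF tL] unfolding M_def by linarith
    have "ind k \<sigma> P' t ! fst (f t) = Z t (fst (f t))"
      by (rule pre_nth[OF fw[OF tL]]) (use le in simp)
    then show "\<exists>i. T \<le> i \<and> i < length (ind k \<sigma> P' t) \<and> ind k \<sigma> P' t ! i"
      using ft le by (rule_tac x="fst (f t)" in exI) simp
    have "take k (drop (snd (f t) * k) (ind k \<sigma> P' t)) = block k (Z t) (snd (f t))"
      by (rule block_from_pre[OF fw[OF tL]]) (use le in simp)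
    then show "\<exists>c. T \<le> c \<and> (c + 1) * k \<le> length (ind k \<sigma> P' t) \<and> \<sigma> (take k (drop (c * k) (ind k \<sigma> P' t))) \<noteq> []"
      using ft le by (rule_tac x="snd (f t)" in exI) simp
  qed
  show ?thesis using A B C D by blast
qed



definition extprop :: "nat \<Rightarrow> (bool list \<Rightarrow> bool list) \<Rightarrow> bool list \<Rightarrow> bool list \<Rightarrow> nat \<Rightarrow> bool list \<Rightarrow> bool" where
  "extprop k \<sigma> P v T P' \<longleftrightarrow> (\<exists>c. P' = P @ c) \<and> k dvd length P' \<and> (\<exists>n c. ind k \<sigma> P' n = v @ c) \<and>
     (\<forall>t\<le>T. (\<exists>i. T \<le> i \<and> i < length (ind k \<sigma> P' t) \<and> ind k \<sigma> P' t ! i) \<and>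
       (\<exists>c. T \<le> c \<and> (c + 1) * k \<le> length (ind k \<sigma> P' t) \<and> \<sigma> (take k (drop (c * k) (ind k \<sigma> P' t))) \<noteq> []))"

definition ext :: "nat \<Rightarrow> (bool list \<Rightarrow> bool list) \<Rightarrow> bool list \<Rightarrow> bool list \<Rightarrow> nat \<Rightarrow> bool list" where
  "ext k \<sigma> P v T = (SOME P'. extprop k \<sigma> P v T P')"

fun stage :: "nat \<Rightarrow> (bool list \<Rightarrow> bool list) \<Rightarrow> bool list \<Rightarrow> (nat \<Rightarrow> bool) \<Rightarrow> nat \<Rightarrow> bool list" where
  "stage k \<sigma> P0 s 0 = P0"
| "stage k \<sigma> P0 s (Suc j) = ext k \<sigma> (stage k \<sigma> P0 s j @ replicate k (s j)) (from_nat j) j"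

definition Xs :: "nat \<Rightarrow> (bool list \<Rightarrow> bool list) \<Rightarrow> bool list \<Rightarrow> (nat \<Rightarrow> bool) \<Rightarrow> nat \<Rightarrow> bool" where
  "Xs k \<sigma> P0 s i = stage k \<sigma> P0 s (Suc i) ! i"

lemma prefix_agree:
  assumes "A = B @ c" "i < length B" shows "A ! i = B ! i"
  using assms by (simp add: nth_append)

locale lmctx =
  fixes k :: nat and \<sigma> :: "bool list \<Rightarrow> bool list" and P0 :: "bool list"
  assumes ES: "erasing_subst k \<sigma>" and SE: "strongly_erasing k \<sigma>"
    and W1: "w_eps k \<sigma> \<noteq> replicate k True" and OPT: "optimal k \<sigma>"
    and dv0: "k dvd length P0"
begin

lemma k0: "0 < k" using weps(1)[OF ES] by simp

lemma stage_prop: "k dvd length (stage k \<sigma> P0 s j) \<and>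
   extprop k \<sigma> (stage k \<sigma> P0 s j @ replicate k (s j)) (from_nat j) j (stage k \<sigma> P0 s (Suc j))"
proof (induction j)
  case 0
  have "k dvd length (P0 @ replicate k (s 0))" using dv0 by simp
  then have "\<exists>P'. extprop k \<sigma> (P0 @ replicate k (s 0)) (from_nat 0) 0 P'"
    unfolding extprop_def by (rule extension[OF ES SE W1 OPT])
  then show ?case using dv0 by (simp add: ext_def someI_ex)
next
  case (Suc j)
  have d: "k dvd length (stage k \<sigma> P0 s (Suc j))" using Suc.IH unfolding extprop_def by blast
  then have "k dvd length (stage k \<sigma> P0 s (Suc j) @ replicate k (s (Suc j)))" by simp
  then have "\<exists>P'. extprop k \<sigma> (stage k \<sigma> P0 s (Suc j) @ replicate k (s (Suc j))) (from_nat (Suc j)) (Suc j) P'"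
    unfolding extprop_def by (rule extension[OF ES SE W1 OPT])
  then have "extprop k \<sigma> (stage k \<sigma> P0 s (Suc j) @ replicate k (s (Suc j))) (from_nat (Suc j)) (Suc j)
      (stage k \<sigma> P0 s (Suc (Suc j)))"
    by (simp add: ext_def someI_ex del: stage.simps(1))
  then show ?case using d by blast
qed

lemma stage_step: "\<exists>c. stage k \<sigma> P0 s (Suc j) = stage k \<sigma> P0 s j @ replicate k (s j) @ c"
  using stage_prop[of s j] unfolding extprop_def by auto

lemma stage_mono: "j \<le> j' \<Longrightarrow> \<exists>c. stage k \<sigma> P0 s j' = stage k \<sigma> P0 s j @ c"
proof (induction j')
  case 0 then show ?case by simp
next
  case (Suc j')
  show ?case
  proof (cases "j = Suc j'")
    case True then show ?thesis by simp
  next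
    case False
    then obtain c where c: "stage k \<sigma> P0 s j' = stage k \<sigma> P0 s j @ c" using Suc by fastforce
    obtain c' where "stage k \<sigma> P0 s (Suc j') = stage k \<sigma> P0 s j' @ replicate k (s j') @ c'"
      using stage_step by blast
    then show ?thesis using c by (rule_tac x="c @ replicate k (s j') @ c'" in exI) simp
  qed
qed

lemma stage_len: "j * k \<le> length (stage k \<sigma> P0 s j)"
proof (induction j)
  case 0 then show ?case by simp
next
  case (Suc j)
  obtain c where "stage k \<sigma> P0 s (Suc j) = stage k \<sigma> P0 s j @ replicate k (s j) @ c"
    using stage_step by blast
  then show ?case using Suc by simp
qed

lemma stage_len2: "j < length (stage k \<sigma> P0 s (Suc j))"
proof -
  have "Suc j * 1 \<le> Suc j * k" using k0 by (intro mult_le_mono2) simp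
  then have "Suc j \<le> Suc j * k" by simp
  then show ?thesis using stage_len[of "Suc j" s] by linarith
qed

lemma Xs_pre: "map (Xs k \<sigma> P0 s) [0..<length (stage k \<sigma> P0 s j)] = stage k \<sigma> P0 s j"
proof (rule nth_equalityI)
  show "length (map (Xs k \<sigma> P0 s) [0..<length (stage k \<sigma> P0 s j)]) = length (stage k \<sigma> P0 s j)" by simp
  fix i assume "i < length (map (Xs k \<sigma> P0 s) [0..<length (stage k \<sigma> P0 s j)])"
  then have i: "i < length (stage k \<sigma> P0 s j)" by simp
  let ?m = "max j (Suc i)"
  obtain c1 where c1: "stage k \<sigma> P0 s ?m = stage k \<sigma> P0 s j @ c1" using stage_mono[of j ?m] by auto
  obtain c2 where c2: "stage k \<sigma> P0 s ?m = stage k \<sigma> P0 s (Suc i) @ c2" using stage_mono[of "Suc i" ?m] by auto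
  have "Xs k \<sigma> P0 s i = stage k \<sigma> P0 s ?m ! i"
    unfolding Xs_def using prefix_agree[OF c2 stage_len2] by simp
  also have "\<dots> = stage k \<sigma> P0 s j ! i" using prefix_agree[OF c1 i] .
  finally show "map (Xs k \<sigma> P0 s) [0..<length (stage k \<sigma> P0 s j)] ! i = stage k \<sigma> P0 s j ! i"
    using i by simp
qed

lemma Xs_good: "good k \<sigma> ((SS k \<sigma> ^^ t) (Xs k \<sigma> P0 s))"
proof -
  let ?Y = "(SS k \<sigma> ^^ t) (Xs k \<sigma> P0 s)"
  have key: "\<exists>i\<ge>c. ?Y i \<and> (\<exists>b\<ge>c. \<sigma> (block k ?Y b) \<noteq> [])" for c
  proof -
    define j where "j = max t c"
    let ?P = "stage k \<sigma> P0 s (Suc j)"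
    have ep: "extprop k \<sigma> (stage k \<sigma> P0 s j @ replicate k (s j)) (from_nat j) j ?P"
      using stage_prop by blast
    have tj: "t \<le> j" unfolding j_def by simp
    obtain i where i: "j \<le> i" "i < length (ind k \<sigma> ?P t)" "ind k \<sigma> ?P t ! i"
      using ep tj unfolding extprop_def by blast
    obtain b where b: "j \<le> b" "(b + 1) * k \<le> length (ind k \<sigma> ?P t)"
      "\<sigma> (take k (drop (b * k) (ind k \<sigma> ?P t))) \<noteq> []"
      using ep tj unfolding extprop_def by blast
    have fw: "map ?Y [0..<length (ind k \<sigma> ?P t)] = ind k \<sigma> ?P t"
      by (rule forward_ind[OF Xs_pre])
    have "?Y i" using pre_nth[OF fw i(2)] i(3) by simp
    moreover have "\<sigma> (block k ?Y b) \<noteq> []" using block_from_pre[OF fw b(2)] b(3) by simp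
    ultimately show ?thesis using i(1) b(1) unfolding j_def
      by (metis max.bounded_iff)
  qed
  have "iot ?Y" unfolding iot_def
  proof
    fix n show "\<exists>m>n. ?Y m" using key[of "Suc n"] by (metis Suc_le_eq)
  qed
  moreover have "\<forall>c. \<exists>i\<ge>c. \<sigma> (block k ?Y i) \<noteq> []" using key by blast
  ultimately show ?thesis unfolding good_def by blast
qed

lemma orbit: "(f_sigma k \<sigma> ^^ t) (binval_inf (Xs k \<sigma> P0 s)) = binval_inf ((SS k \<sigma> ^^ t) (Xs k \<sigma> P0 s))"
proof (induction t)
  case 0 then show ?case by simp
next
  case (Suc t) then show ?case using f_sigma_good[OF ES Xs_good[of t s]] by simp
qed

lemma orbit_hits: "\<exists>n. map ((SS k \<sigma> ^^ n) (Xs k \<sigma> P0 s)) [0..<length v] = v"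
proof -
  define j where "j = to_nat v"
  let ?P = "stage k \<sigma> P0 s (Suc j)"
  have ep: "extprop k \<sigma> (stage k \<sigma> P0 s j @ replicate k (s j)) (from_nat j) j ?P"
    using stage_prop by blast
  then obtain n c where nc: "ind k \<sigma> ?P n = v @ c" unfolding extprop_def j_def by auto
  have fw: "map ((SS k \<sigma> ^^ n) (Xs k \<sigma> P0 s)) [0..<length (ind k \<sigma> ?P n)] = ind k \<sigma> ?P n"
    by (rule forward_ind[OF Xs_pre])
  have l: "length v \<le> length (ind k \<sigma> ?P n)" using nc by simp
  have "take (length v) (map ((SS k \<sigma> ^^ n) (Xs k \<sigma> P0 s)) [0..<length (ind k \<sigma> ?P n)]) = v"
    using fw nc by simp
  then show ?thesis using take_map_upt[OF l] by metis
qed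

lemma dense_orbit: "{0..1} \<subseteq> closure (range (\<lambda>n. (f_sigma k \<sigma> ^^ n) (binval_inf (Xs k \<sigma> P0 s))))"
proof
  fix y :: real assume y: "y \<in> {0..1}"
  show "y \<in> closure (range (\<lambda>n. (f_sigma k \<sigma> ^^ n) (binval_inf (Xs k \<sigma> P0 s))))"
    unfolding closure_approachable
  proof (intro allI impI)
    fix e :: real assume e: "0 < e"
    obtain L where L: "(1/2::real) ^ L < e / 2" using real_arch_pow_inv[of "e/2" "1/2::real"] e by auto
    obtain v where v: "length v = L" "\<bar>binval v - y\<bar> \<le> (1/2) ^ L" using approx_word[of y L] y by auto
    obtain n where n: "map ((SS k \<sigma> ^^ n) (Xs k \<sigma> P0 s)) [0..<length v] = v" using orbit_hits by blast
    have "\<bar>binval_inf ((SS k \<sigma> ^^ n) (Xs k \<sigma> P0 s)) - binval v\<bar> \<le> (1/2) ^ L"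
      using val_prefix[OF n] v(1) by auto
    then have "dist ((f_sigma k \<sigma> ^^ n) (binval_inf (Xs k \<sigma> P0 s))) y < e"
      unfolding orbit dist_real_def using v(2) L by linarith
    then show "\<exists>x\<in>range (\<lambda>n. (f_sigma k \<sigma> ^^ n) (binval_inf (Xs k \<sigma> P0 s))). dist x y < e" by blast
  qed
qed

lemma start: "map (Xs k \<sigma> P0 s) [0..<length P0] = P0"
  using Xs_pre[of s 0] by simp

lemma stage_eq: "\<forall>i<j. s i = s' i \<Longrightarrow> stage k \<sigma> P0 s j = stage k \<sigma> P0 s' j"
  by (induction j) auto

lemma Xs_inj: "inj (\<lambda>s. binval_inf (Xs k \<sigma> P0 s))"
proof (rule injI)
  fix s s' assume eq: "binval_inf (Xs k \<sigma> P0 s) = binval_inf (Xs k \<sigma> P0 s')"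
  show "s = s'"
  proof (rule ccontr)
    assume "s \<noteq> s'"
    then have ex: "\<exists>j. s j \<noteq> s' j" by auto
    define j where "j = (LEAST j. s j \<noteq> s' j)"
    have d: "s j \<noteq> s' j" unfolding j_def using ex by (rule LeastI_ex)
    have b: "\<forall>i<j. s i = s' i" unfolding j_def using not_less_Least by blast
    have st: "stage k \<sigma> P0 s j = stage k \<sigma> P0 s' j" using stage_eq[OF b] .
    have val: "Xs k \<sigma> P0 s (length (stage k \<sigma> P0 s j)) = s j" for s
    proof -
      obtain c where c: "stage k \<sigma> P0 s (Suc j) = stage k \<sigma> P0 s j @ replicate k (s j) @ c"
        using stage_step by blast
      have l: "length (stage k \<sigma> P0 s j) < length (stage k \<sigma> P0 s (Suc j))" using c k0 by simp
      have "Xs k \<sigma> P0 s (length (stage k \<sigma> P0 s j)) = stage k \<sigma> P0 s (Suc j) ! length (stage k \<sigma> P0 s j)"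
        using pre_nth[OF Xs_pre l] by simp
      then show ?thesis using c k0 by (simp add: nth_append)
    qed
    have "Xs k \<sigma> P0 s = Xs k \<sigma> P0 s'"
      using val_inj[OF _ _ eq] Xs_good[of 0 s] Xs_good[of 0 s'] unfolding good_def by simp
    then show False using val[of s] val[of s'] st d by metis
  qed
qed

end

lemma uncountable_fun_bool: "uncountable (UNIV :: (nat \<Rightarrow> bool) set)"
  unfolding uncountable_def
proof
  show "UNIV \<noteq> {}" by simp
  show "\<not> (\<exists>f :: nat \<Rightarrow> nat \<Rightarrow> bool. range f = UNIV)"
  proof
    assume "\<exists>f :: nat \<Rightarrow> nat \<Rightarrow> bool. range f = UNIV"
    then obtain f :: "nat \<Rightarrow> nat \<Rightarrow> bool" where f: "range f = UNIV" by blast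
    have "(\<lambda>n. \<not> f n n) \<in> range f" using f by simp
    then obtain m where "(\<lambda>n. \<not> f n n) = f m" by auto
    then have "(\<not> f m m) = f m m" by (metis)
    then show False by simp
  qed
qed



theorem lemma4p3:
  fixes k :: nat and \<sigma> :: "bool list \<Rightarrow> bool list"
  assumes "erasing_subst k \<sigma>"
    and "strongly_erasing k \<sigma>"
    and "w_eps k \<sigma> \<noteq> replicate k True"
    and "optimal k \<sigma>"
  defines "D \<equiv> {x \<in> {0..1::real}. {0..1} \<subseteq> closure (range (\<lambda>n. (f_sigma k \<sigma> ^^ n) x))}"
  shows "uncountable D \<and> {0..1} \<subseteq> closure D"
proof
  have L: "lmctx k \<sigma> P" if "k dvd length P" for P
    unfolding lmctx_def using assms that by blast
  have inD: "binval_inf (Xs k \<sigma> P s) \<in> D" if "k dvd length P" for P s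
    unfolding D_def using lmctx.dense_orbit[OF L[OF that]] val_ge0 val_le1 by auto
  show "uncountable D"
  proof
    assume c: "countable D"
    have "range (\<lambda>s. binval_inf (Xs k \<sigma> [] s)) \<subseteq> D" using inD[of "[]"] by auto
    then have "countable (range (\<lambda>s. binval_inf (Xs k \<sigma> [] s)))" using c countable_subset by blast
    then have "countable (UNIV :: (nat \<Rightarrow> bool) set)"
      using countable_image_inj_on lmctx.Xs_inj[OF L[of "[]"]] by auto
    then show False using uncountable_fun_bool by simp
  qed
  show "{0..1} \<subseteq> closure D"
  proof
    fix y :: real assume y: "y \<in> {0..1}"
    show "y \<in> closure D" unfolding closure_approachable
    proof (intro allI impI)
      fix e :: real assume e: "0 < e"
      obtain L' where L': "(1/2::real) ^ L' < e / 2" using real_arch_pow_inv[of "e/2" "1/2::real"] e by auto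
      have k0: "0 < k" using weps(1)[OF assms(1)] by simp
      define L where "L = k * L'"
      have "L' \<le> L" unfolding L_def using k0 by simp
      then have LL: "(1/2::real) ^ L \<le> (1/2) ^ L'" by (rule power_decreasing) auto
      obtain v where v: "length v = L" "\<bar>binval v - y\<bar> \<le> (1/2) ^ L" using approx_word[of y L] y by auto
      have dv: "k dvd length v" using v(1) unfolding L_def by simp
      let ?x = "binval_inf (Xs k \<sigma> v (\<lambda>_. False))"
      have "\<bar>?x - binval v\<bar> \<le> (1/2) ^ L"
        using val_prefix[OF lmctx.start[OF L[OF dv], of "\<lambda>_. False"]] v(1) by auto
      then have "dist ?x y < e" unfolding dist_real_def using v(2) L' LL by linarith
      then show "\<exists>x\<in>D. dist x y < e" using inD[OF dv] by blast
    qed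
  qed
qed

end
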